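(* Let $\mathcal{D}$ be a distribution on $\mathcal{X}$, $f:\mathcal{X}\to\mathbb{R}$, $\mathcal{H}$ a class of functions $h:\mathcal{X}\to\mathbb{R}$, $l(h,x)=|f(x)-h(x)|$, $m$ a positive integer and $e>0$, and assume that for every $h\in\mathcal{H}$ and every $x_1,\dots,x_m$ drawn from $\mathcal{D}$, $\frac{1}{m}\sum_{i=1}^m (f(x_i)-h(x_i))^2\le e^2$. Define $$\phi(x_1,\dots,x_m)=\sup_{h\in\mathcal{H}}\Big(L(h)-\frac{1}{m}\sum_{i=1}^m|f(x_i)-h(x_i)|\Big).$$ Then for every $\delta\in(0,1)$, with probability at least $1-\delta$ over $x_1,\dots,x_m$ drawn i.i.d. from $\mathcal{D}$, $$\phi(x_1,\dots,x_m)\le \mathrm{E}_{\bm{x}\sim\mathcal{D}}[\phi(x_1,\dots,x_m)]+e\sqrt{\frac{2\log(2/\delta)}{m}}.$$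
   Context: $L(h)=\mathrm{E}_{x\sim\mathcal{D}}[|f(x)-h(x)|]$ is the generalization error. *)

theory Defs
  imports "HOL-Probability.Probability"
begin

definition gen_err :: "'a measure \<Rightarrow> ('a \<Rightarrow> real) \<Rightarrow> ('a \<Rightarrow> real) \<Rightarrow> real" where
  "gen_err D f h = (\<integral>x. \<bar>f x - h x\<bar> \<partial>D)"

definition phi :: "'a measure \<Rightarrow> ('a \<Rightarrow> real) \<Rightarrow> ('a \<Rightarrow> real) set \<Rightarrow> nat \<Rightarrow> (nat \<Rightarrow> 'a) \<Rightarrow> real" where
  "phi D f H m xs = (SUP h\<in>H. gen_err D f h - (\<Sum>i<m. \<bar>f (xs i) - h (xs i)\<bar>) / real m)"

end

theory Submission imports Defs begin

lemma mcd_mgf: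
  fixes D :: "'a measure" and c l :: real
  assumes D: "prob_space D" and fin: "finite I" and l: "l > 0"
  shows "\<And>g B. g \<in> borel_measurable (PiM I (\<lambda>_. D)) \<Longrightarrow>
    (\<forall>x\<in>space (PiM I (\<lambda>_. D)). \<bar>g x\<bar> \<le> B) \<Longrightarrow>
    (\<forall>x\<in>space (PiM I (\<lambda>_. D)). \<forall>y\<in>space (PiM I (\<lambda>_. D)). \<forall>i\<in>I.
        (\<forall>j\<in>I. j \<noteq> i \<longrightarrow> x j = y j) \<longrightarrow> \<bar>g x - g y\<bar> \<le> c) \<Longrightarrow>
    (\<integral>\<^sup>+x. ennreal (exp (l * (g x - (\<integral>z. g z \<partial>PiM I (\<lambda>_. D))))) \<partial>PiM I (\<lambda>_. D))
      \<le> ennreal (exp (l\<^sup>2 * real (card I) * c\<^sup>2 / 8))"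
  using fin
proof (induction I rule: finite_induct)
  case empty
  have sp: "space (PiM {} (\<lambda>_. D)) = {\<lambda>_. undefined}"
    by (simp add: PiM_empty)
  show ?case
    by (simp add: PiM_empty nn_integral_count_space_finite lebesgue_integral_count_space_finite)
next
  case (insert k J g B)
  interpret PP: product_prob_space "\<lambda>_. D" "insert k J"
    by (simp add: product_prob_space_def product_prob_space_axioms_def product_sigma_finite_def
          D prob_space_imp_sigma_finite)
  have Dfm: "finite_measure D" using D prob_space_def by blast
  have Dsf: "sigma_finite_measure D" by (rule prob_space_imp_sigma_finite[OF D])
  have PGp: "prob_space (PiM (insert k J) (\<lambda>_. D))" by (rule prob_space_PiM) (rule D)
  have PGfm: "finite_measure (PiM (insert k J) (\<lambda>_. D))" using PGp prob_space_def by blast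
  note gm[measurable] = insert.prems(1)
  have upd: "x(k:=y) \<in> space (PiM (insert k J) (\<lambda>_. D))"
    if "x \<in> space (PiM J (\<lambda>_. D))" "y \<in> space D" for x y
    using measurable_space[OF measurable_add_dim, of "(x,y)" J "\<lambda>_. D" k] that
    by (simp add: space_pair_measure)
  have gbd: "\<bar>g z\<bar> \<le> B" if "z \<in> space (PiM (insert k J) (\<lambda>_. D))" for z
    using insert.prems(2) that by blast
  have gm2[measurable]: "(\<lambda>(x,y). g (x(k:=y))) \<in> borel_measurable (PiM J (\<lambda>_. D) \<Otimes>\<^sub>M D)"
    using measurable_comp[OF measurable_add_dim gm] by (simp add: comp_def case_prod_beta')
  have gint: "integrable D (\<lambda>y. g (x(k:=y)))" if "x \<in> space (PiM J (\<lambda>_. D))" for x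
    by (rule finite_measure.integrable_const_bound[OF Dfm, where B=B]) (use upd gbd that in auto)
  define h where "h x = (\<integral>y. g (x(k:=y)) \<partial>D)" for x
  have hm[measurable]: "h \<in> borel_measurable (PiM J (\<lambda>_. D))"
    unfolding h_def
    by (rule sigma_finite_measure.borel_measurable_lebesgue_integral[OF Dsf])
       (use gm2 in simp)
  have hbd: "\<forall>x\<in>space (PiM J (\<lambda>_. D)). \<bar>h x\<bar> \<le> B"
  proof
    fix x assume x: "x \<in> space (PiM J (\<lambda>_. D))"
    have "\<bar>h x\<bar> \<le> (\<integral>y. \<bar>g (x(k:=y))\<bar> \<partial>D)"
      unfolding h_def by (rule integral_abs_bound)
    also have "\<dots> \<le> (\<integral>y. B \<partial>D)"
      by (rule integral_mono) (use gint[OF x] upd gbd x in auto)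
    finally show "\<bar>h x\<bar> \<le> B" by (simp add: prob_space.prob_space[OF D])
  qed
  have hdiff: "\<forall>x\<in>space (PiM J (\<lambda>_. D)). \<forall>y\<in>space (PiM J (\<lambda>_. D)). \<forall>i\<in>J.
        (\<forall>j\<in>J. j \<noteq> i \<longrightarrow> x j = y j) \<longrightarrow> \<bar>h x - h y\<bar> \<le> c"
  proof (intro ballI impI)
    fix x x' i assume x: "x \<in> space (PiM J (\<lambda>_. D))" and x': "x' \<in> space (PiM J (\<lambda>_. D))"
      and i: "i \<in> J" and eq: "\<forall>j\<in>J. j \<noteq> i \<longrightarrow> x j = x' j"
    have "\<bar>h x - h x'\<bar> = \<bar>\<integral>y. g (x(k:=y)) - g (x'(k:=y)) \<partial>D\<bar>"
      unfolding h_def using gint[OF x] gint[OF x'] by simp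
    also have "\<dots> \<le> (\<integral>y. \<bar>g (x(k:=y)) - g (x'(k:=y))\<bar> \<partial>D)"
      by (rule integral_abs_bound)
    also have "\<dots> \<le> (\<integral>y. c \<partial>D)"
    proof (rule integral_mono)
      show "integrable D (\<lambda>y. \<bar>g (x(k:=y)) - g (x'(k:=y))\<bar>)"
        using gint[OF x] gint[OF x'] by auto
      fix y assume y: "y \<in> space D"
      have "\<forall>j\<in>insert k J. j \<noteq> i \<longrightarrow> (x(k:=y)) j = (x'(k:=y)) j"
        using eq by auto
      moreover have "i \<in> insert k J" using i by simp
      ultimately show "\<bar>g (x(k:=y)) - g (x'(k:=y))\<bar> \<le> c"
        using insert.prems(3) upd[OF x y] upd[OF x' y] by blast
    qed simp
    finally show "\<bar>h x - h x'\<bar> \<le> c" by (simp add: prob_space.prob_space[OF D])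
  qed
  have IH: "(\<integral>\<^sup>+x. ennreal (exp (l * (h x - (\<integral>z. h z \<partial>PiM J (\<lambda>_. D))))) \<partial>PiM J (\<lambda>_. D))
      \<le> ennreal (exp (l\<^sup>2 * real (card J) * c\<^sup>2 / 8))"
    by (rule insert.IH[OF hm hbd hdiff])
  have gintG: "integrable (PiM (insert k J) (\<lambda>_. D)) g"
    by (rule finite_measure.integrable_const_bound[OF PGfm, where B=B]) (use gbd in auto)
  have mu: "(\<integral>z. g z \<partial>PiM (insert k J) (\<lambda>_. D)) = (\<integral>z. h z \<partial>PiM J (\<lambda>_. D))"
    unfolding h_def by (rule PP.product_integral_insert[OF insert.hyps(1,2) gintG])
  define \<mu> where "\<mu> = (\<integral>z. h z \<partial>PiM J (\<lambda>_. D))"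
  define C where "C = exp (l\<^sup>2 * c\<^sup>2 / 8)"
  have inner: "(\<integral>\<^sup>+y. ennreal (exp (l * (g (x(k:=y)) - \<mu>))) \<partial>D) \<le> ennreal (exp (l * (h x - \<mu>))) * C"
    if x: "x \<in> space (PiM J (\<lambda>_. D))" for x
  proof -
    define S where "S = (\<lambda>y. g (x(k:=y))) ` space D"
    define a where "a = Inf S"
    have Sne: "S \<noteq> {}" unfolding S_def using prob_space.not_empty[OF D] by auto
    have Sbdd: "bdd_below S" unfolding S_def using gbd upd[OF x]
      by (intro bdd_belowI[where m="-B"]) (force simp: abs_le_iff)
    have ival: "g (x(k:=y)) \<in> {a..a+c}" if y: "y \<in> space D" for y
    proof -
      have lo: "a \<le> g (x(k:=y))" unfolding a_def S_def
        using Sbdd y unfolding S_def by (intro cInf_lower) auto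
      have "g (x(k:=y)) - c \<le> a" unfolding a_def
      proof (rule cInf_greatest[OF Sne])
        fix s assume "s \<in> S"
        then obtain y' where y': "y' \<in> space D" "s = g (x(k:=y'))" unfolding S_def by auto
        have "(\<forall>j\<in>insert k J. j \<noteq> k \<longrightarrow> (x(k:=y)) j = (x(k:=y')) j)" by auto
        then have "\<bar>g (x(k:=y)) - g (x(k:=y'))\<bar> \<le> c"
          using insert.prems(3) upd[OF x y] upd[OF x y'(1)] by blast
        then show "g (x(k:=y)) - c \<le> s" using y' by auto
      qed
      then show ?thesis using lo by simp
    qed
    interpret IB: interval_bounded_random_variable D "\<lambda>y. g (x(k:=y))" a "a+c"
    proof unfold_locales
      show "(\<lambda>y. g (x(k:=y))) \<in> borel_measurable D"
        by (rule borel_measurable_integrable[OF gint[OF x]])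
      show "AE y in D. g (x(k:=y)) \<in> {a..a+c}"
        using ival by auto
    qed
    have HL: "(\<integral>\<^sup>+y. ennreal (exp (l * (g (x(k:=y)) - h x))) \<partial>D) \<le> ennreal C"
      using IB.Hoeffdings_lemma_nn_integral[OF l] unfolding C_def h_def by simp
    have "(\<integral>\<^sup>+y. ennreal (exp (l * (g (x(k:=y)) - \<mu>))) \<partial>D)
        = (\<integral>\<^sup>+y. ennreal (exp (l * (h x - \<mu>))) * ennreal (exp (l * (g (x(k:=y)) - h x))) \<partial>D)"
      by (intro nn_integral_cong) (simp add: ennreal_mult' [symmetric] exp_add [symmetric] algebra_simps)
    also have "\<dots> = ennreal (exp (l * (h x - \<mu>))) * (\<integral>\<^sup>+y. ennreal (exp (l * (g (x(k:=y)) - h x))) \<partial>D)"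
      by (rule nn_integral_cmult) (use gint[OF x] in auto)
    also have "\<dots> \<le> ennreal (exp (l * (h x - \<mu>))) * C"
      by (rule mult_left_mono[OF HL]) simp
    finally show ?thesis .
  qed
  have "(\<integral>\<^sup>+z. ennreal (exp (l * (g z - (\<integral>z. g z \<partial>PiM (insert k J) (\<lambda>_. D))))) \<partial>PiM (insert k J) (\<lambda>_. D))
      = (\<integral>\<^sup>+x. (\<integral>\<^sup>+y. ennreal (exp (l * (g (x(k:=y)) - \<mu>))) \<partial>D) \<partial>PiM J (\<lambda>_. D))"
    unfolding mu \<mu>_def[symmetric]
    by (rule PP.product_nn_integral_insert[OF insert.hyps(1,2)]) measurable
  also have "\<dots> \<le> (\<integral>\<^sup>+x. ennreal (exp (l * (h x - \<mu>))) * C \<partial>PiM J (\<lambda>_. D))"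
    by (rule nn_integral_mono) (rule inner)
  also have "\<dots> = (\<integral>\<^sup>+x. ennreal (exp (l * (h x - \<mu>))) \<partial>PiM J (\<lambda>_. D)) * C"
    by (rule nn_integral_multc) measurable
  also have "\<dots> \<le> ennreal (exp (l\<^sup>2 * real (card J) * c\<^sup>2 / 8)) * C"
    by (rule mult_right_mono) (use IH \<mu>_def in auto)
  also have "\<dots> = ennreal (exp (l\<^sup>2 * real (card (insert k J)) * c\<^sup>2 / 8))"
    using insert.hyps unfolding C_def
    by (simp add: ennreal_mult' [symmetric] exp_add [symmetric] algebra_simps add_divide_distrib)
  finally show ?case .
qed

theorem lemma1:
  fixes D :: "'a measure" and f :: "'a \<Rightarrow> real" and H :: "('a \<Rightarrow> real) set"
    and m :: nat and e \<delta> :: real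
  assumes "prob_space D"
    and "f \<in> borel_measurable D"
    and "\<And>h. h \<in> H \<Longrightarrow> h \<in> borel_measurable D"
    and "m > 0" and "e > 0"
    and "\<And>h xs. h \<in> H \<Longrightarrow> (\<forall>i<m. xs i \<in> space D) \<Longrightarrow>
           (\<Sum>i<m. (f (xs i) - h (xs i))\<^sup>2) / real m \<le> e\<^sup>2"
    and "phi D f H m \<in> borel_measurable (PiM {..<m} (\<lambda>_. D))"
    and "0 < \<delta>" and "\<delta> < 1"
  shows "measure (PiM {..<m} (\<lambda>_. D))
           {xs \<in> space (PiM {..<m} (\<lambda>_. D)).
              phi D f H m xs \<le> (\<integral>ys. phi D f H m ys \<partial>(PiM {..<m} (\<lambda>_. D)))
                                + e * sqrt (2 * ln (2 / \<delta>) / real m)}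
         \<ge> 1 - \<delta>"
proof -
  note D = assms(1)
  note fm[measurable] = assms(2)
  note phim[measurable] = assms(7)
  define P where "P = PiM {..<m} (\<lambda>_. D)"
  have Pp: "prob_space P" unfolding P_def by (rule prob_space_PiM) (rule D)
  have Dfm: "finite_measure D" using D prob_space_def by blast
  have spP: "xs i \<in> space D" if "xs \<in> space P" "i < m" for xs i
    using that unfolding P_def by (auto simp: space_PiM)
  have fe: "\<bar>f x - h x\<bar> \<le> e" if h: "h \<in> H" and x: "x \<in> space D" for h x
  proof -
    have "(\<Sum>i<m. (f x - h x)\<^sup>2) / real m \<le> e\<^sup>2"
      using assms(6)[OF h, of "\<lambda>_. x"] x by simp
    then have "(f x - h x)\<^sup>2 \<le> e\<^sup>2" using assms(4) by simp
    then have "\<bar>f x - h x\<bar>\<^sup>2 \<le> e\<^sup>2" by simp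
    then show ?thesis by (rule power2_le_imp_le) (use assms(5) in simp)
  qed
  have ge: "0 \<le> gen_err D f h \<and> gen_err D f h \<le> e" if h: "h \<in> H" for h
  proof -
    note hm[measurable] = assms(3)[OF h]
    have int: "integrable D (\<lambda>x. \<bar>f x - h x\<bar>)"
      by (rule finite_measure.integrable_const_bound[OF Dfm, where B=e]) (use fe[OF h] in auto)
    have "(\<integral>x. \<bar>f x - h x\<bar> \<partial>D) \<le> (\<integral>x. e \<partial>D)"
      by (rule integral_mono[OF int]) (use fe[OF h] finite_measure.integrable_const[OF Dfm] in auto)
    then show ?thesis unfolding gen_err_def by (simp add: prob_space.prob_space[OF D])
  qed
  define T where "T h xs = gen_err D f h - (\<Sum>i<m. \<bar>f (xs i) - h (xs i)\<bar>) / real m" for h xs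
  have phiT: "phi D f H m xs = (SUP h\<in>H. T h xs)" for xs unfolding phi_def T_def by simp
  have Tb: "-e \<le> T h xs \<and> T h xs \<le> e" if h: "h \<in> H" and xs: "xs \<in> space P" for h xs
  proof -
    have "(\<Sum>i<m. \<bar>f (xs i) - h (xs i)\<bar>) \<le> (\<Sum>i<m. e)"
      by (rule sum_mono) (use fe[OF h] spP[OF xs] in auto)
    then have s1: "(\<Sum>i<m. \<bar>f (xs i) - h (xs i)\<bar>) / real m \<le> e"
      using assms(4) by (simp add: divide_le_eq mult.commute)
    have s0: "0 \<le> (\<Sum>i<m. \<bar>f (xs i) - h (xs i)\<bar>) / real m" by simp
    show ?thesis using s0 s1 ge[OF h] unfolding T_def by linarith
  qed
  have bddT: "bdd_above ((\<lambda>h. T h xs) ` H)" if "xs \<in> space P" for xs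
    using Tb[OF _ that] by (intro bdd_aboveI[where M=e]) auto
  define B where "B = e + \<bar>Sup ({}::real set)\<bar>"
  have phib: "\<forall>xs\<in>space P. \<bar>phi D f H m xs\<bar> \<le> B"
  proof
    fix xs assume xs: "xs \<in> space P"
    show "\<bar>phi D f H m xs\<bar> \<le> B"
    proof (cases "H = {}")
      case True then show ?thesis unfolding phiT B_def using assms(5) by simp
    next
      case False
      then obtain h0 where h0: "h0 \<in> H" by auto
      have "phi D f H m xs \<le> e" unfolding phiT
        by (rule cSUP_least[OF False]) (use Tb[OF _ xs] in auto)
      moreover have "T h0 xs \<le> phi D f H m xs" unfolding phiT
        by (rule cSUP_upper[OF h0 bddT[OF xs]])
      ultimately show ?thesis using Tb[OF h0 xs] unfolding B_def by auto
    qed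
  qed
  have onedir: "phi D f H m xs \<le> phi D f H m ys + e / real m"
    if xs: "xs \<in> space P" and ys: "ys \<in> space P" and i: "i < m"
      and eq: "\<forall>j\<in>{..<m}. j \<noteq> i \<longrightarrow> xs j = ys j" for xs ys i
  proof (cases "H = {}")
    case True then show ?thesis unfolding phiT using assms(4,5) by simp
  next
    case False
    show ?thesis unfolding phiT
    proof (rule cSUP_least[OF False])
      fix h assume h: "h \<in> H"
      have fin: "finite {..<m}" by simp
      have sx: "(\<Sum>j<m. \<bar>f (xs j) - h (xs j)\<bar>) = \<bar>f (xs i) - h (xs i)\<bar> + (\<Sum>j\<in>{..<m}-{i}. \<bar>f (xs j) - h (xs j)\<bar>)"
        using i by (subst sum.remove[OF fin, of i]) auto
      have sy: "(\<Sum>j<m. \<bar>f (ys j) - h (ys j)\<bar>) = \<bar>f (ys i) - h (ys i)\<bar> + (\<Sum>j\<in>{..<m}-{i}. \<bar>f (xs j) - h (xs j)\<bar>)"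
        using i eq by (subst sum.remove[OF fin, of i]) (auto intro!: sum.cong)
      have a: "\<bar>f (ys i) - h (ys i)\<bar> \<le> e" using fe[OF h spP[OF ys i]] .
      have b: "0 \<le> \<bar>f (xs i) - h (xs i)\<bar>" by simp
      have "T h xs = T h ys + (\<bar>f (ys i) - h (ys i)\<bar> - \<bar>f (xs i) - h (xs i)\<bar>) / real m"
        unfolding T_def sx sy by (simp add: diff_divide_distrib add_divide_distrib)
      also have "\<dots> \<le> T h ys + e / real m"
        using a b assms(4) by (intro add_left_mono divide_right_mono) auto
      also have "T h ys \<le> (SUP h\<in>H. T h ys)"
        by (rule cSUP_upper[OF h bddT[OF ys]])
      finally show "T h xs \<le> (SUP h\<in>H. T h ys) + e / real m" by simp
    qed
  qed
  have phid: "\<forall>xs\<in>space P. \<forall>ys\<in>space P. \<forall>i\<in>{..<m}.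
        (\<forall>j\<in>{..<m}. j \<noteq> i \<longrightarrow> xs j = ys j) \<longrightarrow> \<bar>phi D f H m xs - phi D f H m ys\<bar> \<le> e / real m"
  proof (intro ballI impI)
    fix xs ys i assume xs: "xs \<in> space P" and ys: "ys \<in> space P" and i: "i \<in> {..<m}"
      and eq: "\<forall>j\<in>{..<m}. j \<noteq> i \<longrightarrow> xs j = ys j"
    have eq': "\<forall>j\<in>{..<m}. j \<noteq> i \<longrightarrow> ys j = xs j" using eq by auto
    show "\<bar>phi D f H m xs - phi D f H m ys\<bar> \<le> e / real m"
      using onedir[OF xs ys _ eq] onedir[OF ys xs _ eq'] i by auto
  qed
  define L where "L = ln (2 / \<delta>)"
  have L: "L > 0" unfolding L_def using assms(8,9) by simp
  define s where "s = sqrt (2 * L / real m)"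
  have s: "s > 0" unfolding s_def using L assms(4) by simp
  have s2: "s\<^sup>2 = 2 * L / real m" unfolding s_def using L assms(4) by simp
  define t where "t = e * s"
  define l where "l = 4 * real m * s / e"
  have l: "l > 0" unfolding l_def using s assms(4,5) by simp
  define \<mu> where "\<mu> = (\<integral>ys. phi D f H m ys \<partial>P)"
  have mgf: "(\<integral>\<^sup>+x. ennreal (exp (l * (phi D f H m x - \<mu>))) \<partial>P)
      \<le> ennreal (exp (l\<^sup>2 * real m * (e / real m)\<^sup>2 / 8))"
    using mcd_mgf[OF D _ l, of "{..<m}" "phi D f H m" B "e / real m"] phib phid phim
    unfolding P_def \<mu>_def by simp
  have expo: "l\<^sup>2 * real m * (e / real m)\<^sup>2 / 8 - l * t = - 4 * L"
  proof -
    have "l\<^sup>2 * real m * (e / real m)\<^sup>2 / 8 = 2 * real m * s\<^sup>2"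
      unfolding l_def using assms(4,5) by (simp add: power2_eq_square field_simps)
    moreover have "l * t = 4 * real m * s\<^sup>2"
      unfolding l_def t_def using assms(4,5) by (simp add: power2_eq_square field_simps)
    ultimately show ?thesis using s2 assms(4) by (simp add: field_simps)
  qed
  define bad where "bad = {xs \<in> space P. \<mu> + t < phi D f H m xs}"
  have badm: "bad \<in> sets P" unfolding bad_def P_def by measurable
  have "emeasure P bad = (\<integral>\<^sup>+x. indicator bad x \<partial>P)"
    using badm by simp
  also have "\<dots> \<le> (\<integral>\<^sup>+x. ennreal (exp (l * (phi D f H m x - \<mu>))) * ennreal (exp (- l * t)) \<partial>P)"
  proof (rule nn_integral_mono)
    fix x assume x: "x \<in> space P"
    show "indicator bad x \<le> ennreal (exp (l * (phi D f H m x - \<mu>))) * ennreal (exp (- l * t))"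
    proof (cases "x \<in> bad")
      case True
      then have "l * t \<le> l * (phi D f H m x - \<mu>)" unfolding bad_def using l by auto
      then have "0 \<le> l * (phi D f H m x - \<mu>) + - l * t" by simp
      then have "1 \<le> exp (l * (phi D f H m x - \<mu>) + - l * t)" by simp
      then show ?thesis using True
        by (simp add: ennreal_mult' [symmetric] exp_add [symmetric])
    qed simp
  qed
  also have "\<dots> = (\<integral>\<^sup>+x. ennreal (exp (l * (phi D f H m x - \<mu>))) \<partial>P) * ennreal (exp (- l * t))"
    by (rule nn_integral_multc) (unfold P_def, measurable)
  also have "\<dots> \<le> ennreal (exp (l\<^sup>2 * real m * (e / real m)\<^sup>2 / 8)) * ennreal (exp (- l * t))"
    by (rule mult_right_mono[OF mgf]) simp
  also have "\<dots> = ennreal (exp (- 4 * L))"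
    using expo by (simp add: ennreal_mult' [symmetric] exp_add [symmetric])
  finally have eb: "emeasure P bad \<le> ennreal (exp (- 4 * L))" .
  have "exp (- 4 * L) \<le> exp (- L)" using L by simp
  also have "exp (- L) = \<delta> / 2" unfolding L_def using assms(8) by (simp add: exp_minus)
  finally have "exp (- 4 * L) \<le> \<delta>" using assms(8) by simp
  then have mb: "measure P bad \<le> \<delta>"
    using eb Pp by (simp add: finite_measure.emeasure_eq_measure[OF Pp[unfolded prob_space_def, THEN conjunct1]])
  have good: "{xs \<in> space P. phi D f H m xs \<le> \<mu> + t} = space P - bad"
    unfolding bad_def by auto
  have "measure P (space P - bad) = 1 - measure P bad"
    using prob_space.prob_compl[OF Pp badm] .
  then show ?thesis
    using good mb unfolding P_def[symmetric] \<mu>_def[symmetric] t_def s_def L_def by simp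
qed

end
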